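(* Let $\mathcal A=(S,R_0)$ be an argumentation network with joint attacks, where $S\neq\varnothing$ and $R_0\subseteq(2^S\setminus\{\varnothing\})\times S$. Then there exists a legitimate Caminada–Gabbay labelling $\lambda$ of $\mathcal A$ (i.e. $\mathcal A$ has complete extensions).
   Context: A legitimate Caminada–Gabbay labelling of $(S,R_0)$ is $\lambda:S\to\{\mathrm{in},\mathrm{out},\mathrm{und}\}$ such that for each $x\in S$: (CG1) $\lambda(x)=\mathrm{in}$ iff either $x$ is attacked by no $G$, or for every $G$ with $GR_0x$ there is $y\in G$ with $\lambda(y)=\mathrm{out}$; (CG2) $\lambda(x)=\mathrm{out}$ iff for some $G$ with $GR_0x$, all $y\in G$ have $\lambda(y)=\mathrm{in}$; (CG3) $\lambda(x)=\mathrm{und}$ iff for every $G$ with $GR_0x$ there is $y\in G$ with $\lambda(y)\neq\mathrm{in}$, and for some $G'$ with $G'R_0x$ every $y\in G'$ has $\lambda(y)\in\{\mathrm{in},\mathrm{und}\}$. Complete extensions are identified with legitimate Caminada–Gabbay labellings. *)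

theory Defs
  imports Main
begin

datatype label = In | Out | Und

definition joint_attack_network :: "'a set \<Rightarrow> ('a set \<times> 'a) set \<Rightarrow> bool" where
  "joint_attack_network S R0 \<longleftrightarrow>
     S \<noteq> {} \<and> (\<forall>(G, x) \<in> R0. G \<subseteq> S \<and> G \<noteq> {} \<and> x \<in> S)"

definition legitimate_CG_labelling ::
  "'a set \<Rightarrow> ('a set \<times> 'a) set \<Rightarrow> ('a \<Rightarrow> label) \<Rightarrow> bool" where
  "legitimate_CG_labelling S R0 lab \<longleftrightarrow>
     (\<forall>x\<in>S.
        (lab x = In \<longleftrightarrow>
           ((\<forall>G. (G, x) \<notin> R0) \<or> (\<forall>G. (G, x) \<in> R0 \<longrightarrow> (\<exists>y\<in>G. lab y = Out)))) \<and>
        (lab x = Out \<longleftrightarrow> (\<exists>G. (G, x) \<in> R0 \<and> (\<forall>y\<in>G. lab y = In))) \<and>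
        (lab x = Und \<longleftrightarrow>
           ((\<forall>G. (G, x) \<in> R0 \<longrightarrow> (\<exists>y\<in>G. lab y \<noteq> In)) \<and>
            (\<exists>G'. (G', x) \<in> R0 \<and> (\<forall>y\<in>G'. lab y \<in> {In, Und})))))"

end

theory Submission imports Defs begin
definition Phi :: "('a set \<times> 'a) set \<Rightarrow> ('a \<times> bool) set \<Rightarrow> ('a \<times> bool) set" where
  "Phi R0 X = {(x, b). (b \<and> (\<forall>G. (G, x) \<in> R0 \<longrightarrow> (\<exists>y\<in>G. (y, False) \<in> X)))
                     \<or> (\<not> b \<and> (\<exists>G. (G, x) \<in> R0 \<and> (\<forall>y\<in>G. (y, True) \<in> X)))}"
lemma PT: "(x, True) \<in> Phi R0 X \<longleftrightarrow> (\<forall>G. (G, x) \<in> R0 \<longrightarrow> (\<exists>y\<in>G. (y, False) \<in> X))"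
  unfolding Phi_def by simp
lemma PF: "(x, False) \<in> Phi R0 X \<longleftrightarrow> (\<exists>G. (G, x) \<in> R0 \<and> (\<forall>y\<in>G. (y, True) \<in> X))"
  unfolding Phi_def by simp
lemma Phi_mono: "mono (Phi R0)"
  unfolding mono_def Phi_def by blast

lemma L_fix: "lfp (Phi R0) = Phi R0 (lfp (Phi R0))"
  using lfp_unfold[OF Phi_mono] .

lemma LT: "(x, True) \<in> lfp (Phi R0) \<longleftrightarrow> (\<forall>G. (G, x) \<in> R0 \<longrightarrow> (\<exists>y\<in>G. (y, False) \<in> lfp (Phi R0)))"
  by (subst L_fix) (rule PT)

lemma LF: "(x, False) \<in> lfp (Phi R0) \<longleftrightarrow> (\<exists>G. (G, x) \<in> R0 \<and> (\<forall>y\<in>G. (y, True) \<in> lfp (Phi R0)))"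
  by (subst L_fix) (rule PF)

lemma L_disj: "(x, True) \<in> lfp (Phi R0) \<Longrightarrow> (x, False) \<notin> lfp (Phi R0)"
proof -
  define L where "L = lfp (Phi R0)"
  define Q where "Q = {p. p \<in> L \<and> (fst p, \<not> snd p) \<notin> L}"
  have Qm: "(y, c) \<in> Q \<longleftrightarrow> (y, c) \<in> L \<and> (y, \<not> c) \<notin> L" for y c unfolding Q_def by simp
  have LT': "(y, True) \<in> L \<longleftrightarrow> (\<forall>G. (G, y) \<in> R0 \<longrightarrow> (\<exists>z\<in>G. (z, False) \<in> L))" for y
    unfolding L_def by (rule LT)
  have LF': "(y, False) \<in> L \<longleftrightarrow> (\<exists>G. (G, y) \<in> R0 \<and> (\<forall>z\<in>G. (z, True) \<in> L))" for y
    unfolding L_def by (rule LF)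
  have QL: "Q \<subseteq> L" unfolding Q_def by blast
  have sub: "Phi R0 Q \<subseteq> L"
  proof -
    have "Phi R0 Q \<subseteq> Phi R0 L" using monoD[OF Phi_mono[of R0] QL] .
    also have "Phi R0 L = L" unfolding L_def using L_fix[of R0] by (rule sym)
    finally show ?thesis .
  qed
  have "Phi R0 Q \<subseteq> Q"
  proof
    fix p assume p: "p \<in> Phi R0 Q"
    obtain x b where pe: "p = (x, b)" by (cases p)
    have inL: "(x, b) \<in> L" using p pe sub by blast
    show "p \<in> Q"
    proof (cases b)
      case True
      have h: "\<forall>G. (G, x) \<in> R0 \<longrightarrow> (\<exists>y\<in>G. (y, False) \<in> Q)"
        using p PT[of x R0 Q] pe True by simp
      have "(x, False) \<notin> L"
      proof
        assume "(x, False) \<in> L"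
        then obtain G where G: "(G, x) \<in> R0" "\<forall>y\<in>G. (y, True) \<in> L"
          using LF'[of x] by blast
        then obtain y where "y \<in> G" "(y, False) \<in> Q" using h by blast
        then show False using G Qm[of y False] by simp
      qed
      then show ?thesis using inL pe True Qm[of x b] by simp
    next
      case False
      have "\<exists>G. (G, x) \<in> R0 \<and> (\<forall>y\<in>G. (y, True) \<in> Q)"
        using p PF[of x R0 Q] pe False by simp
      then obtain G where G: "(G, x) \<in> R0" "\<forall>y\<in>G. (y, True) \<in> Q" by blast
      have "(x, True) \<notin> L"
      proof
        assume "(x, True) \<in> L"
        then obtain y where "y \<in> G" "(y, False) \<in> L" using G(1) LT'[of x] by blast
        then show False using G(2) Qm[of y True] by simp
      qed
      then show ?thesis using inL pe False Qm[of x b] by simp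
    qed
  qed
  then have LQ: "L \<subseteq> Q" unfolding L_def by (rule lfp_lowerbound)
  assume a: "(x, True) \<in> lfp (Phi R0)"
  then have "(x, True) \<in> L" unfolding L_def .
  then have "(x, True) \<in> Q" using LQ by blast
  then have "(x, False) \<notin> L" using Qm[of x True] by simp
  then show "(x, False) \<notin> lfp (Phi R0)" unfolding L_def .
qed
theorem theorem21:
  fixes S :: "'a set" and R0 :: "('a set \<times> 'a) set"
  assumes "joint_attack_network S R0"
  shows "\<exists>lab. legitimate_CG_labelling S R0 lab"
proof -
  let ?L = "lfp (Phi R0)"
  define lab where "lab x = (if (x, True) \<in> ?L then In else if (x, False) \<in> ?L then Out else Und)" for x
  have In_iff: "lab x = In \<longleftrightarrow> (x, True) \<in> ?L" for x by (simp add: lab_def)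
  have Out_iff: "lab x = Out \<longleftrightarrow> (x, False) \<in> ?L" for x
    using L_disj[of x R0] by (auto simp: lab_def)
  have T: "(x, True) \<in> ?L \<longleftrightarrow> (\<forall>G. (G, x) \<in> R0 \<longrightarrow> (\<exists>y\<in>G. (y, False) \<in> ?L))" for x
    by (rule LT)
  have F: "(x, False) \<in> ?L \<longleftrightarrow> (\<exists>G. (G, x) \<in> R0 \<and> (\<forall>y\<in>G. (y, True) \<in> ?L))" for x
    by (rule LF)
  have U: "lab x = Und \<longleftrightarrow> lab x \<noteq> In \<and> lab x \<noteq> Out" for x by (cases "lab x") auto
  have U2: "lab y \<in> {In, Und} \<longleftrightarrow> lab y \<noteq> Out" for y by (cases "lab y") auto
  have "legitimate_CG_labelling S R0 lab"
    unfolding legitimate_CG_labelling_def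
  proof (intro ballI conjI)
    fix x
    show "(lab x = In) = ((\<forall>G. (G, x) \<notin> R0) \<or> (\<forall>G. (G, x) \<in> R0 \<longrightarrow> (\<exists>y\<in>G. lab y = Out)))"
      using T[of x] by (auto simp: In_iff Out_iff)
    show "(lab x = Out) = (\<exists>G. (G, x) \<in> R0 \<and> (\<forall>y\<in>G. lab y = In))"
      using F[of x] by (auto simp: In_iff Out_iff)
    show "(lab x = Und) = ((\<forall>G. (G, x) \<in> R0 \<longrightarrow> (\<exists>y\<in>G. lab y \<noteq> In)) \<and>
            (\<exists>G'. (G', x) \<in> R0 \<and> (\<forall>y\<in>G'. lab y \<in> {In, Und})))"
      unfolding U U2 using T[of x] F[of x] by (auto simp: In_iff Out_iff)
  qed
  then show ?thesis by blast
qed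

end
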